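(* Let a binary game be given as described in the context, and suppose Assumption (A1) holds. Then a vector $(x_i,y_i)_{i\in I}$ is a Nash equilibrium of the binary game if and only if there exist vectors $\big(\widetilde y_i^{(1)},\widetilde y_i^{(0)},\widetilde\lambda_i^{(1)},\widetilde\lambda_i^{(0)},\kappa_i^{(1)},\kappa_i^{(0)}\big)_{i\in I}$ such that, with $\zeta_i^{(1)}=\zeta_i^{(0)}=0$ for all $i\in I$, the point $\big(x_i,y_i,\widetilde y_i^{(1)},\widetilde y_i^{(0)},\widetilde\lambda_i^{(1)},\widetilde\lambda_i^{(0)},\kappa_i^{(1)},\kappa_i^{(0)},\zeta_i^{(1)},\zeta_i^{(0)}\big)_{i\in I}$ is a feasible point of problem (P).
   Context: Binary game: players $i\in I=\{1,\dots,n\}$. Player $i$ chooses a binary variable $x_i\in\{0,1\}$ and a continuous vector $y_i\in\mathbb{R}^m$, and solves $\min_{x_i,y_i} f_i(x_i,y_i,y_{-i})$ subject to $g_i(x_i,y_i)\le 0$, where $g_i:\{0,1\}\times\mathbb{R}^m\to\mathbb{R}^k$, $y_{-i}=(y_j)_{j\ne i}$ are the rivals' continuous decisions (which depend on the rivals' binary decisions), and $K_i=\{(x_i,y_i): g_i(x_i,y_i)\le 0\}$. Nash equilibrium: a vector $((x_i^*,y_i^* )\in K_i)_{i\in I}$ such that for every $i$: (a) $y_i^*$ minimizes $f_i(x_i^*,\cdot,y_{-i}^* )$ over $\{y_i: g_i(x_i^*,y_i)\le0\}$; and (b) $f_i(x_i^*,y_i^*,y_{-i}^* )\le f_i(x_i^\times,y_i^\times,y_{-i}^*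 )$, where $x_i^\times=1-x_i^*$ and $y_i^\times$ minimizes $f_i(x_i^\times,\cdot,y_{-i}^* )$ over $\{y_i: g_i(x_i^\times,y_i)\le 0\}$. Assumption (A1): for each $i$ and each fixed value of $x_i$ (and fixed $y_{-i}$), the first-order (KKT) conditions of player $i$'s problem with respect to $y_i$ are necessary and sufficient for optimality, and the feasible region $\{y_i: g_i(x_i,y_i)\le 0\}$ is compact and non-empty. Problem (P): given a sufficiently large constant $\widetilde K>0$ (larger than the difference between any upper and lower bounds on each $y_i$ and than the difference between the maximum and minimum values of each $f_i$) and functions $F$ of $(x_i,y_i)_{i\in I}$ and $G$ of the compensation variables, minimize $F((x_i,y_i)_{i\in I})+G((\zeta_i^{(1)},\zeta_i^{(0)})_{i\in I})$ over $x_i\in\{0,1\}$, $y_i,\widetilde y_i^{(1)},\widetilde y_i^{(0)}\in\mathbb{R}^m$, $\widetilde\lambda_i^{(1)},\widetilde\lambda_i^{(0)}\in\mathbb{R}^k_+$, $\kappa_i^{(1)},\kappa_i^{(0)},\zeta_i^{(1)},\zeta_i^{(0)}\in\mathbb{R}_+$, subject to, for all $i\in I$ and both $b\in\{0,1\}$: $\nabla_{y_i} f_i(b,\widetilde y_i^{(b)},y_{-i})+(\widetilde\lambda_i^{(b)})^T\nabla_{y_i} g_i(b,\widetilde y_i^{(b)})=0$; $0\le -g_i(b,\widetilde y_i^{(b)})\perp \widetilde\lambda_i^{(b)}\ge 0$; $f_i(1,\widetilde y_i^{(1)},y_{-i})+\kappa_i^{(1)}-\zeta_i^{(1)}-\kappa_i^{(0)}+\zeta_i^{(0)}=f_i(0,\widetilde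 y_i^{(0)},y_{-i})$; $\kappa_i^{(1)}+\zeta_i^{(1)}\le x_i\widetilde K$; $\kappa_i^{(0)}+\zeta_i^{(0)}\le (1-x_i)\widetilde K$; $\widetilde y_i^{(0)}-x_i\widetilde K\le y_i\le \widetilde y_i^{(0)}+x_i\widetilde K$; $\widetilde y_i^{(1)}-(1-x_i)\widetilde K\le y_i\le \widetilde y_i^{(1)}+(1-x_i)\widetilde K$ (componentwise). *)

theory Defs
  imports "HOL-Analysis.Analysis"
begin

text \<open>Binary decisions are reals in {0,1}.
  f i b v yo : objective of player i with own binary decision b, own continuous
  decision v, and rivals' decisions yo.  The rivals' profile y_{-i} is represented
  by the full profile with the i-th entry masked out (others y i).\<close>

definition others :: "('p \<Rightarrow> real^'m) \<Rightarrow> 'p \<Rightarrow> ('p \<Rightarrow> real^'m)" where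
  "others y i = y(i := 0)"

definition feas :: "('p \<Rightarrow> real \<Rightarrow> real^'m \<Rightarrow> real^'k) \<Rightarrow> 'p \<Rightarrow> real \<Rightarrow> (real^'m) set" where
  "feas g i b = {v. \<forall>j. g i b v $ j \<le> 0}"

definition is_min ::
  "('p \<Rightarrow> real \<Rightarrow> real^'m \<Rightarrow> ('p \<Rightarrow> real^'m) \<Rightarrow> real) \<Rightarrow>
   ('p \<Rightarrow> real \<Rightarrow> real^'m \<Rightarrow> real^'k) \<Rightarrow> 'p \<Rightarrow> real \<Rightarrow> ('p \<Rightarrow> real^'m) \<Rightarrow> real^'m \<Rightarrow> bool" where
  "is_min f g i b yo v \<longleftrightarrow> v \<in> feas g i b \<and> (\<forall>w \<in> feas g i b. f i b v yo \<le> f i b w yo)"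

definition stationary ::
  "('p \<Rightarrow> real \<Rightarrow> real^'m \<Rightarrow> ('p \<Rightarrow> real^'m) \<Rightarrow> real^'m) \<Rightarrow>
   ('p \<Rightarrow> real \<Rightarrow> real^'m \<Rightarrow> real^'m^'k) \<Rightarrow> 'p \<Rightarrow> real \<Rightarrow> ('p \<Rightarrow> real^'m) \<Rightarrow> real^'m \<Rightarrow> real^'k \<Rightarrow> bool" where
  "stationary gradf gradg i b yo v lam \<longleftrightarrow>
     gradf i b v yo + (\<Sum>j\<in>UNIV. lam $ j *\<^sub>R (gradg i b v $ j)) = 0"

definition compl ::
  "('p \<Rightarrow> real \<Rightarrow> real^'m \<Rightarrow> real^'k) \<Rightarrow> 'p \<Rightarrow> real \<Rightarrow> real^'m \<Rightarrow> real^'k \<Rightarrow> bool" where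
  "compl g i b v lam \<longleftrightarrow>
     (\<forall>j. 0 \<le> - (g i b v $ j) \<and> 0 \<le> lam $ j \<and> (- (g i b v $ j)) * lam $ j = 0)"

definition KKT ::
  "('p \<Rightarrow> real \<Rightarrow> real^'m \<Rightarrow> ('p \<Rightarrow> real^'m) \<Rightarrow> real^'m) \<Rightarrow>
   ('p \<Rightarrow> real \<Rightarrow> real^'m \<Rightarrow> real^'m^'k) \<Rightarrow>
   ('p \<Rightarrow> real \<Rightarrow> real^'m \<Rightarrow> real^'k) \<Rightarrow> 'p \<Rightarrow> real \<Rightarrow> ('p \<Rightarrow> real^'m) \<Rightarrow> real^'m \<Rightarrow> bool" where
  "KKT gradf gradg g i b yo v \<longleftrightarrow>
     (\<exists>lam. stationary gradf gradg i b yo v lam \<and> compl g i b v lam)"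

definition nash ::
  "('p \<Rightarrow> real \<Rightarrow> real^'m \<Rightarrow> ('p \<Rightarrow> real^'m) \<Rightarrow> real) \<Rightarrow>
   ('p \<Rightarrow> real \<Rightarrow> real^'m \<Rightarrow> real^'k) \<Rightarrow> ('p \<Rightarrow> real) \<Rightarrow> ('p \<Rightarrow> real^'m) \<Rightarrow> bool" where
  "nash f g x y \<longleftrightarrow>
     (\<forall>i. x i \<in> {0, 1} \<and> y i \<in> feas g i (x i)
        \<and> is_min f g i (x i) (others y i) (y i)
        \<and> (\<forall>w. is_min f g i (1 - x i) (others y i) w \<longrightarrow>
               f i (x i) (y i) (others y i) \<le> f i (1 - x i) w (others y i)))"

definition P_feasible ::
  "('p \<Rightarrow> real \<Rightarrow> real^'m \<Rightarrow> ('p \<Rightarrow> real^'m) \<Rightarrow> real) \<Rightarrow>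
   ('p \<Rightarrow> real \<Rightarrow> real^'m \<Rightarrow> real^'k) \<Rightarrow>
   ('p \<Rightarrow> real \<Rightarrow> real^'m \<Rightarrow> ('p \<Rightarrow> real^'m) \<Rightarrow> real^'m) \<Rightarrow>
   ('p \<Rightarrow> real \<Rightarrow> real^'m \<Rightarrow> real^'m^'k) \<Rightarrow> real \<Rightarrow>
   ('p \<Rightarrow> real) \<Rightarrow> ('p \<Rightarrow> real^'m) \<Rightarrow> ('p \<Rightarrow> real^'m) \<Rightarrow> ('p \<Rightarrow> real^'m) \<Rightarrow>
   ('p \<Rightarrow> real^'k) \<Rightarrow> ('p \<Rightarrow> real^'k) \<Rightarrow> ('p \<Rightarrow> real) \<Rightarrow> ('p \<Rightarrow> real) \<Rightarrow>
   ('p \<Rightarrow> real) \<Rightarrow> ('p \<Rightarrow> real) \<Rightarrow> bool" where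
  "P_feasible f g gradf gradg K x y yt1 yt0 lam1 lam0 kap1 kap0 zeta1 zeta0 \<longleftrightarrow>
     (\<forall>i. x i \<in> {0, 1}
        \<and> (\<forall>j. 0 \<le> lam1 i $ j) \<and> (\<forall>j. 0 \<le> lam0 i $ j)
        \<and> 0 \<le> kap1 i \<and> 0 \<le> kap0 i \<and> 0 \<le> zeta1 i \<and> 0 \<le> zeta0 i
        \<and> stationary gradf gradg i 1 (others y i) (yt1 i) (lam1 i)
        \<and> stationary gradf gradg i 0 (others y i) (yt0 i) (lam0 i)
        \<and> compl g i 1 (yt1 i) (lam1 i)
        \<and> compl g i 0 (yt0 i) (lam0 i)
        \<and> f i 1 (yt1 i) (others y i) + kap1 i - zeta1 i - kap0 i + zeta0 i
            = f i 0 (yt0 i) (others y i)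
        \<and> kap1 i + zeta1 i \<le> x i * K
        \<and> kap0 i + zeta0 i \<le> (1 - x i) * K
        \<and> (\<forall>j. yt0 i $ j - x i * K \<le> y i $ j \<and> y i $ j \<le> yt0 i $ j + x i * K)
        \<and> (\<forall>j. yt1 i $ j - (1 - x i) * K \<le> y i $ j \<and> y i $ j \<le> yt1 i $ j + (1 - x i) * K))"

end

theory Submission
  imports Defs
begin

theorem theorem1:
  fixes f :: "'p::finite \<Rightarrow> real \<Rightarrow> real^'m::finite \<Rightarrow> ('p \<Rightarrow> real^'m) \<Rightarrow> real"
    and g :: "'p \<Rightarrow> real \<Rightarrow> real^'m \<Rightarrow> real^'k::finite"
    and gradf :: "'p \<Rightarrow> real \<Rightarrow> real^'m \<Rightarrow> ('p \<Rightarrow> real^'m) \<Rightarrow> real^'m"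
    and gradg :: "'p \<Rightarrow> real \<Rightarrow> real^'m \<Rightarrow> real^'m^'k"
    and K :: real
    and x :: "'p \<Rightarrow> real" and y :: "'p \<Rightarrow> real^'m"
  assumes grad_f: "\<And>i b v yo. b \<in> {0, 1} \<Longrightarrow>
             ((\<lambda>u. f i b u yo) has_derivative (\<lambda>h. gradf i b v yo \<bullet> h)) (at v)"
    and grad_g: "\<And>i b v j. b \<in> {0, 1} \<Longrightarrow>
             ((\<lambda>u. g i b u $ j) has_derivative (\<lambda>h. (gradg i b v $ j) \<bullet> h)) (at v)"
    and A1_KKT: "\<And>i b yy v. b \<in> {0, 1} \<Longrightarrow>
             is_min f g i b (others yy i) v \<longleftrightarrow> KKT gradf gradg g i b (others yy i) v"
    and A1_compact: "\<And>i b. b \<in> {0, 1} \<Longrightarrow> compact (feas g i b) \<and> feas g i b \<noteq> {}"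
    and K_pos: "0 < K"
    and K_bounds_y: "\<And>i b b' v w j. b \<in> {0, 1} \<Longrightarrow> b' \<in> {0, 1} \<Longrightarrow>
             v \<in> feas g i b \<Longrightarrow> w \<in> feas g i b' \<Longrightarrow> \<bar>v $ j - w $ j\<bar> < K"
    and K_bounds_f: "\<And>i b b' v w yy yy'. b \<in> {0, 1} \<Longrightarrow> b' \<in> {0, 1} \<Longrightarrow>
             v \<in> feas g i b \<Longrightarrow> w \<in> feas g i b' \<Longrightarrow>
             (\<forall>l. l \<noteq> i \<longrightarrow> yy l \<in> feas g l 0 \<union> feas g l 1) \<Longrightarrow>
             (\<forall>l. l \<noteq> i \<longrightarrow> yy' l \<in> feas g l 0 \<union> feas g l 1) \<Longrightarrow>
             \<bar>f i b v (others yy i) - f i b' w (others yy' i)\<bar> < K"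
  shows "nash f g x y \<longleftrightarrow>
     (\<exists>yt1 yt0 lam1 lam0 kap1 kap0.
        P_feasible f g gradf gradg K x y yt1 yt0 lam1 lam0 kap1 kap0 (\<lambda>_. 0) (\<lambda>_. 0))"
proof
  have exmin: "\<exists>w. is_min f g i b (others y i) w" if b: "b \<in> {0,1}" for i b
  proof -
    have c: "continuous_on (feas g i b) (\<lambda>u. f i b u (others y i))"
      by (intro continuous_at_imp_continuous_on ballI has_derivative_continuous[OF grad_f[OF b]])
    obtain w where "w \<in> feas g i b" "\<forall>v\<in>feas g i b. f i b w (others y i) \<le> f i b v (others y i)"
      using continuous_attains_inf[OF _ _ c] A1_compact[OF b] by blast
    then show ?thesis unfolding is_min_def by blast
  qed
  have minKKT: "\<exists>lam. stationary gradf gradg i b (others y i) w lam \<and> compl g i b w lam"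
    if "b \<in> {0,1}" "is_min f g i b (others y i) w" for i b w
    using A1_KKT[OF that(1), of i y w] that unfolding KKT_def by blast
  have lampos: "\<forall>j. 0 \<le> lam $ j" if "compl g i b w lam" for i b w lam
    using that unfolding compl_def by blast
  assume N: "nash f g x y"
  have Nfeas: "\<forall>l. l \<noteq> i \<longrightarrow> y l \<in> feas g l 0 \<union> feas g l 1" for i
    using N unfolding nash_def by (metis UnI1 UnI2 insertE singletonD)
  have per: "\<forall>i. \<exists>a b l1 l0 k1 k0. x i \<in> {0, 1}
        \<and> (\<forall>j. 0 \<le> l1 $ j) \<and> (\<forall>j. 0 \<le> l0 $ j)
        \<and> 0 \<le> k1 \<and> 0 \<le> k0 \<and> 0 \<le> (0::real) \<and> 0 \<le> (0::real)
        \<and> stationary gradf gradg i 1 (others y i) a l1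
        \<and> stationary gradf gradg i 0 (others y i) b l0
        \<and> compl g i 1 a l1
        \<and> compl g i 0 b l0
        \<and> f i 1 a (others y i) + k1 - 0 - k0 + 0 = f i 0 b (others y i)
        \<and> k1 + 0 \<le> x i * K
        \<and> k0 + 0 \<le> (1 - x i) * K
        \<and> (\<forall>j. b $ j - x i * K \<le> y i $ j \<and> y i $ j \<le> b $ j + x i * K)
        \<and> (\<forall>j. a $ j - (1 - x i) * K \<le> y i $ j \<and> y i $ j \<le> a $ j + (1 - x i) * K)"
    (is "\<forall>i. \<exists>a b l1 l0 k1 k0. ?P i a b l1 l0 k1 k0")
  proof
    fix i
    have xi: "x i \<in> {0,1}" and yf: "y i \<in> feas g i (x i)"
      and ym: "is_min f g i (x i) (others y i) (y i)"
      and yb: "\<forall>w. is_min f g i (1 - x i) (others y i) w \<longrightarrow>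
               f i (x i) (y i) (others y i) \<le> f i (1 - x i) w (others y i)"
      using N unfolding nash_def by blast+
    show "\<exists>a b l1 l0 k1 k0. ?P i a b l1 l0 k1 k0"
    proof (cases "x i = 1")
      case True
      obtain w where w: "is_min f g i 0 (others y i) w" using exmin[of 0 i] by auto
      obtain l1 where l1: "stationary gradf gradg i 1 (others y i) (y i) l1" "compl g i 1 (y i) l1"
        using minKKT[of 1 i "y i"] ym True by auto
      obtain l0 where l0: "stationary gradf gradg i 0 (others y i) w l0" "compl g i 0 w l0"
        using minKKT[of 0 i w] w by auto
      have wf: "w \<in> feas g i 0" using w unfolding is_min_def by blast
      have le: "f i 1 (y i) (others y i) \<le> f i 0 w (others y i)" using yb w True by auto
      have fK: "\<bar>f i 1 (y i) (others y i) - f i 0 w (others y i)\<bar> < K"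
        using K_bounds_f[of 1 0 "y i" i w y y] yf wf True Nfeas by auto
      have yK: "\<bar>y i $ j - w $ j\<bar> < K" for j
        using K_bounds_y[of 1 0 "y i" i w] yf wf True by auto
      have "?P i (y i) w l1 l0 (f i 0 w (others y i) - f i 1 (y i) (others y i)) 0"
        using True l1 l0 lampos[OF l1(2)] lampos[OF l0(2)] le fK yK K_pos
        by (auto simp: abs_less_iff) (smt (verit) yK)+
      then show ?thesis by blast
    next
      case False
      then have x0: "x i = 0" using xi by auto
      obtain w where w: "is_min f g i 1 (others y i) w" using exmin[of 1 i] by auto
      obtain l0 where l0: "stationary gradf gradg i 0 (others y i) (y i) l0" "compl g i 0 (y i) l0"
        using minKKT[of 0 i "y i"] ym x0 by auto
      obtain l1 where l1: "stationary gradf gradg i 1 (others y i) w l1" "compl g i 1 w l1"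
        using minKKT[of 1 i w] w by auto
      have wf: "w \<in> feas g i 1" using w unfolding is_min_def by blast
      have le: "f i 0 (y i) (others y i) \<le> f i 1 w (others y i)" using yb w x0 by auto
      have fK: "\<bar>f i 0 (y i) (others y i) - f i 1 w (others y i)\<bar> < K"
        using K_bounds_f[of 0 1 "y i" i w y y] yf wf x0 Nfeas by auto
      have yK: "\<bar>y i $ j - w $ j\<bar> < K" for j
        using K_bounds_y[of 0 1 "y i" i w] yf wf x0 by auto
      have "?P i w (y i) l1 l0 0 (f i 1 w (others y i) - f i 0 (y i) (others y i))"
        using x0 l1 l0 lampos[OF l1(2)] lampos[OF l0(2)] le fK yK K_pos
        by (auto simp: abs_less_iff) (smt (verit) yK)+
      then show ?thesis by blast
    qed
  qed
  then show "\<exists>yt1 yt0 lam1 lam0 kap1 kap0.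
        P_feasible f g gradf gradg K x y yt1 yt0 lam1 lam0 kap1 kap0 (\<lambda>_. 0) (\<lambda>_. 0)"
    unfolding P_feasible_def by (simp only: choice_iff)
next
  assume "\<exists>yt1 yt0 lam1 lam0 kap1 kap0.
        P_feasible f g gradf gradg K x y yt1 yt0 lam1 lam0 kap1 kap0 (\<lambda>_. 0) (\<lambda>_. 0)"
  then obtain yt1 yt0 lam1 lam0 kap1 kap0 where
    P: "P_feasible f g gradf gradg K x y yt1 yt0 lam1 lam0 kap1 kap0 (\<lambda>_. 0) (\<lambda>_. 0)" by blast
  show "nash f g x y" unfolding nash_def
  proof
    fix i
    have xi: "x i \<in> {0,1}" and s1: "stationary gradf gradg i 1 (others y i) (yt1 i) (lam1 i)"
      and s0: "stationary gradf gradg i 0 (others y i) (yt0 i) (lam0 i)"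
      and c1: "compl g i 1 (yt1 i) (lam1 i)" and c0: "compl g i 0 (yt0 i) (lam0 i)"
      and eq: "f i 1 (yt1 i) (others y i) + kap1 i - kap0 i = f i 0 (yt0 i) (others y i)"
      and k1: "0 \<le> kap1 i" "kap1 i \<le> x i * K" and k0: "0 \<le> kap0 i" "kap0 i \<le> (1 - x i) * K"
      and b0: "\<forall>j. yt0 i $ j - x i * K \<le> y i $ j \<and> y i $ j \<le> yt0 i $ j + x i * K"
      and b1: "\<forall>j. yt1 i $ j - (1 - x i) * K \<le> y i $ j \<and> y i $ j \<le> yt1 i $ j + (1 - x i) * K"
      using P unfolding P_feasible_def by auto
    have m1: "is_min f g i 1 (others y i) (yt1 i)"
      using A1_KKT[of 1 i y "yt1 i"] s1 c1 unfolding KKT_def by auto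
    have m0: "is_min f g i 0 (others y i) (yt0 i)"
      using A1_KKT[of 0 i y "yt0 i"] s0 c0 unfolding KKT_def by auto
    show "x i \<in> {0, 1} \<and> y i \<in> feas g i (x i)
        \<and> is_min f g i (x i) (others y i) (y i)
        \<and> (\<forall>w. is_min f g i (1 - x i) (others y i) w \<longrightarrow>
               f i (x i) (y i) (others y i) \<le> f i (1 - x i) w (others y i))"
    proof (cases "x i = 1")
      case True
      have "y i = yt1 i" using b1 True by (simp add: vec_eq_iff) (meson order_antisym)
      moreover have "kap0 i = 0" using k0 True by simp
      ultimately have le: "f i 1 (y i) (others y i) \<le> f i 0 w (others y i)"
        if "w \<in> feas g i 0" for w
      proof -
        have "f i 0 (yt0 i) (others y i) \<le> f i 0 w (others y i)"
          using m0 that unfolding is_min_def by blast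
        then show ?thesis unfolding \<open>y i = yt1 i\<close> using eq k1 \<open>kap0 i = 0\<close> by linarith
      qed
      show ?thesis using True m1 le \<open>y i = yt1 i\<close> unfolding is_min_def by auto
    next
      case False
      then have x0: "x i = 0" using xi by auto
      have "y i = yt0 i" using b0 x0 by (simp add: vec_eq_iff) (meson order_antisym)
      moreover have "kap1 i = 0" using k1 x0 by simp
      ultimately have le: "f i 0 (y i) (others y i) \<le> f i 1 w (others y i)"
        if "w \<in> feas g i 1" for w
      proof -
        have "f i 1 (yt1 i) (others y i) \<le> f i 1 w (others y i)"
          using m1 that unfolding is_min_def by blast
        then show ?thesis unfolding \<open>y i = yt0 i\<close> using eq k0 \<open>kap1 i = 0\<close> by linarith
      qed
      show ?thesis using x0 m0 le \<open>y i = yt0 i\<close> unfolding is_min_def by auto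
    qed
  qed
qed

end
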